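(* Let $v,w\ge 3$ be integers for which there exist a Steiner triple system $\mathrm{STS}(v)$ and a Steiner triple system $\mathrm{STS}(w)$, and suppose at least one of these two systems admits a zero-sum $k$-flow for some integer $k\ge 3$. Then there exists an $\mathrm{STS}(vw)$ which admits a zero-sum $k$-flow.
   Context: A Steiner triple system $\mathrm{STS}(v)$ is a pair $(X,\mathcal{B})$ where $|X|=v$ and $\mathcal{B}$ is a collection of 3-subsets (blocks) of $X$ such that every 2-subset of $X$ lies in exactly one block. More generally, for a $t$-$(v,k,\lambda)$ design $(X,\mathcal{B})$ and an integer $n\ge 2$, a zero-sum $n$-flow is a map $f:\mathcal{B}\to\{\pm1,\pm2,\ldots,\pm(n-1)\}$ such that for every point $x\in X$, $\sum_{B\in\mathcal{B},\,x\in B} f(B)=0$ (equivalently, a vector with entries in $\{\pm1,\ldots,\pm(n-1)\}$ in the null space of the point–block incidence matrix). *)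

theory Defs
  imports Main
begin

definition is_sts :: "'a set \<Rightarrow> 'a set set \<Rightarrow> bool" where
  "is_sts X B \<longleftrightarrow> finite X \<and> (\<forall>b\<in>B. b \<subseteq> X \<and> card b = 3) \<and>
     (\<forall>x\<in>X. \<forall>y\<in>X. x \<noteq> y \<longrightarrow> (\<exists>!b. b \<in> B \<and> {x, y} \<subseteq> b))"

definition is_zero_sum_flow :: "'a set \<Rightarrow> 'a set set \<Rightarrow> nat \<Rightarrow> ('a set \<Rightarrow> int) \<Rightarrow> bool" where
  "is_zero_sum_flow X B n f \<longleftrightarrow>
     (\<forall>b\<in>B. f b \<noteq> 0 \<and> \<bar>f b\<bar> \<le> int n - 1) \<and>
     (\<forall>x\<in>X. (\<Sum>b\<in>{b\<in>B. x \<in> b}. f b) = 0)"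

definition has_zero_sum_flow :: "'a set \<Rightarrow> 'a set set \<Rightarrow> nat \<Rightarrow> bool" where
  "has_zero_sum_flow X B n \<longleftrightarrow> (\<exists>f. is_zero_sum_flow X B n f)"

end

theory Submission
  imports Defs
begin

lemma sts_fin: "is_sts X B \<Longrightarrow> finite X"
  unfolding is_sts_def by (elim conjE)
lemma sts_blocks: assumes "is_sts X B" "b \<in> B" shows "b \<subseteq> X" "card b = 3"
proof -
  have "\<forall>b\<in>B. b \<subseteq> X \<and> card b = 3" using assms(1) unfolding is_sts_def by (elim conjE)
  thus "b \<subseteq> X" "card b = 3" using assms(2) by simp_all
qed
lemma sts_pairs: assumes "is_sts X B" "x\<in>X" "y\<in>X" "x\<noteq>y" shows "\<exists>!b. b\<in>B \<and> {x,y}\<subseteq>b"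
proof -
  have all: "\<forall>x\<in>X. \<forall>y\<in>X. x \<noteq> y \<longrightarrow> (\<exists>!b. b \<in> B \<and> {x, y} \<subseteq> b)"
    using assms(1) unfolding is_sts_def by (elim conjE)
  show ?thesis using all[rule_format, OF assms(2-4)] .
qed
lemma sts_uniq: assumes "is_sts X B" "b\<in>B" "b'\<in>B" "x\<in>b" "y\<in>b" "x\<in>b'" "y\<in>b'" "x\<noteq>y"
  shows "b = b'"
proof -
  have "x \<in> X" "y \<in> X" using sts_blocks(1)[OF assms(1,2)] assms(4,5) by auto
  from sts_pairs[OF assms(1) this assms(8)] obtain c where
    c: "c\<in>B \<and> {x,y}\<subseteq>c" and u: "\<forall>d. d\<in>B \<and> {x,y}\<subseteq>d \<longrightarrow> d = c" by (rule ex1E)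
  have "b = c" using u assms(2,4,5) by blast
  moreover have "b' = c" using u assms(3,6,7) by blast
  ultimately show ?thesis by simp
qed
lemma sts_intro: assumes "finite X" "\<And>b. b\<in>B \<Longrightarrow> b \<subseteq> X" "\<And>b. b\<in>B \<Longrightarrow> card b = 3"
  "\<And>x y. x\<in>X \<Longrightarrow> y\<in>X \<Longrightarrow> x\<noteq>y \<Longrightarrow> \<exists>b\<in>B. {x,y} \<subseteq> b"
  "\<And>x y b b'. x\<in>X \<Longrightarrow> y\<in>X \<Longrightarrow> x\<noteq>y \<Longrightarrow> b\<in>B \<Longrightarrow> b'\<in>B \<Longrightarrow> {x,y}\<subseteq>b \<Longrightarrow> {x,y}\<subseteq>b' \<Longrightarrow> b = b'"
  shows "is_sts X B"
  unfolding is_sts_def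
proof (intro conjI)
  show "finite X" by fact
  show "\<forall>b\<in>B. b \<subseteq> X \<and> card b = 3" using assms(2,3) by simp
  show "\<forall>x\<in>X. \<forall>y\<in>X. x \<noteq> y \<longrightarrow> (\<exists>!b. b \<in> B \<and> {x, y} \<subseteq> b)"
  proof (intro ballI impI)
    fix x y assume a: "x\<in>X" "y\<in>X" "x\<noteq>y"
    obtain b where b: "b\<in>B" "{x,y}\<subseteq>b" using assms(4)[OF a] by blast
    show "\<exists>!b. b \<in> B \<and> {x, y} \<subseteq> b"
      by (rule ex1I[of _ b]) (use b assms(5)[OF a] in auto)
  qed
qed


definition lab :: "'x set \<Rightarrow> nat \<Rightarrow> 'x" where
  "lab b = (SOME g. inj_on g {..<3} \<and> g ` {..<3} = b)"

lemma lab_ex: assumes "card b = 3" shows "inj_on (lab b) {..<3} \<and> lab b ` {..<3} = b"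
proof -
  have "finite b" using assms by (metis card.infinite zero_neq_numeral)
  then obtain h where "bij_betw h {0..<card b} b" using ex_bij_betw_nat_finite by blast
  hence "inj_on h {..<3} \<and> h ` {..<3} = b" using assms
    by (simp add: bij_betw_def atLeast0LessThan)
  thus ?thesis unfolding lab_def
    using someI_ex[of "\<lambda>g. inj_on g {..<3} \<and> g ` {..<3} = b"] by blast
qed

lemma lab_in: "card b = 3 \<Longrightarrow> t < 3 \<Longrightarrow> lab b t \<in> b"
  using lab_ex by blast
lemma lab_inj: "card b = 3 \<Longrightarrow> t < 3 \<Longrightarrow> t' < 3 \<Longrightarrow> lab b t = lab b t' \<Longrightarrow> t = t'"
  using lab_ex[of b] unfolding inj_on_def by blast
lemma lab_surj: "card b = 3 \<Longrightarrow> x \<in> b \<Longrightarrow> \<exists>t<3. x = lab b t"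
  using lab_ex[of b] by blast

definition blk :: "'a set \<Rightarrow> 'b set \<Rightarrow> nat \<Rightarrow> nat \<Rightarrow> ('a \<times> 'b) set" where
  "blk b1 b2 c j = (\<lambda>t. (lab b1 t, lab b2 ((j + c*t) mod 3))) ` {..<3}"

lemma three_cases: "(t::nat) < 3 \<Longrightarrow> t = 0 \<or> t = 1 \<or> t = 2" by auto

lemma arith_tab: "\<forall>t\<in>{0,1,2::nat}. \<forall>t'\<in>{0,1,2::nat}. \<forall>m\<in>{0,1,2::nat}. \<forall>m'\<in>{0,1,2::nat}.
   t\<noteq>t' \<longrightarrow> m\<noteq>m' \<longrightarrow> (\<exists>c\<in>{1,2::nat}. \<exists>j\<in>{0,1,2::nat}. m = (j+c*t) mod 3 \<and> m' = (j+c*t') mod 3)"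
  by simp

lemma arith_ex:
  fixes t t' m m' :: nat
  assumes "t<3" "t'<3" "m<3" "m'<3" "t\<noteq>t'" "m\<noteq>m'"
  shows "\<exists>c j. (c = 1 \<or> c = 2) \<and> j<3 \<and> m = (j+c*t) mod 3 \<and> m' = (j+c*t') mod 3"
proof -
  have "t\<in>{0,1,2}" "t'\<in>{0,1,2}" "m\<in>{0,1,2}" "m'\<in>{0,1,2}" using assms by auto
  then obtain c j where "c\<in>{1,2::nat}" "j\<in>{0,1,2::nat}" "m = (j+c*t) mod 3 \<and> m' = (j+c*t') mod 3"
    using arith_tab assms(5,6) by meson
  thus ?thesis by (intro exI[of _ c] exI[of _ j]) auto
qed

lemma arith_uniq:
  fixes t t' m m' :: nat
  assumes "t<3" "t'<3" "t\<noteq>t'" "c = 1 \<or> c = 2" "j<3" "c' = 1 \<or> c' = 2" "j'<3"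
    "(j+c*t) mod 3 = (j'+c'*t) mod 3" "(j+c*t') mod 3 = (j'+c'*t') mod 3"
  shows "c = c' \<and> j = j'"
  using three_cases[OF assms(1)] three_cases[OF assms(2)] three_cases[OF assms(5)] three_cases[OF assms(7)] assms(3,4,6,8,9)
  by (elim disjE; simp; elim disjE; simp)

lemma sum_lt3: "(\<Sum>j<(3::nat). g j) = g 0 + g 1 + (g 2::int)"
  by (simp add: numeral_3_eq_3 numeral_2_eq_2)

lemma sum3: "(m::nat) < 3 \<Longrightarrow> (c::nat) \<in> {1,2} \<Longrightarrow> t < 3 \<Longrightarrow>
   (\<Sum>j<3. if m = (j + c*t) mod 3 then (v::int) else 0) = v"
proof -
  assume a: "m < 3" "c \<in> {1,2}" "t < 3"
  have tab: "\<forall>m\<in>{0,1,2::nat}. \<forall>c\<in>{1,2::nat}. \<forall>t\<in>{0,1,2::nat}.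
     (if m = (0 + c*t) mod 3 then (v::int) else 0) + (if m = (1 + c*t) mod 3 then v else 0)
      + (if m = (2 + c*t) mod 3 then v else 0) = v" by simp
  have "m\<in>{0,1,2}" "t\<in>{0,1,2}" using a by auto
  thus ?thesis unfolding sum_lt3 using tab a(2) by blast
qed



lemma transfer_nat:
  assumes "is_sts X B" "has_zero_sum_flow X B k"
  shows "\<exists>(Y::nat set) B'. is_sts Y B' \<and> card Y = card X \<and> has_zero_sum_flow Y B' k"
proof -
  have fin: "finite X" using sts_fin[OF assms(1)] .
  obtain h where h: "bij_betw h {0..<card X} X" using ex_bij_betw_nat_finite[OF fin] by blast
  define g where "g = the_inv_into {0..<card X} h"
  have g: "bij_betw g X {0..<card X}" unfolding g_def by (rule bij_betw_the_inv_into[OF h])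
  have ginj: "inj_on g X" using g bij_betw_imp_inj_on by blast
  have gX: "g ` X = {0..<card X}" using g bij_betw_imp_surj_on by blast
  obtain F where F: "is_zero_sum_flow X B k F" using assms(2) unfolding has_zero_sum_flow_def by blast
  have pairs: "\<And>x y. x\<in>X \<Longrightarrow> y\<in>X \<Longrightarrow> x \<noteq> y \<Longrightarrow> (\<exists>!b. b \<in> B \<and> {x, y} \<subseteq> b)"
    by (rule sts_pairs[OF assms(1)])
  have Bsub: "\<And>b. b \<in> B \<Longrightarrow> b \<subseteq> X" using sts_blocks(1)[OF assms(1)] .
  define Y where "Y = {0..<card X}"
  define B' where "B' = (\<lambda>b. g ` b) ` B"
  define F' where "F' = (\<lambda>b'. F (inv_into X g ` b'))"
  have gback: "\<And>b. b \<in> B \<Longrightarrow> inv_into X g ` (g ` b) = b" using ginj Bsub by simp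
  have injB: "inj_on (\<lambda>b. g ` b) B"
  proof (rule inj_onI)
    fix b b' assume bb: "b \<in> B" "b' \<in> B" "g ` b = g ` b'"
    have "b = inv_into X g ` (g ` b)" using gback[OF bb(1)] by (rule sym)
    also have "\<dots> = inv_into X g ` (g ` b')" using bb(3) by (rule arg_cong)
    also have "\<dots> = b'" by (rule gback[OF bb(2)])
    finally show "b = b'" .
  qed
  have s1: "finite Y" unfolding Y_def by simp
  have s2: "\<forall>b'\<in>B'. b' \<subseteq> Y \<and> card b' = 3"
  proof
    fix b' assume "b' \<in> B'"
    then obtain b where b: "b \<in> B" "b' = g ` b" unfolding B'_def by blast
    have c3: "card b = 3" using sts_blocks(2)[OF assms(1) b(1)] .
    have "g ` b \<subseteq> Y" using Bsub[OF b(1)] gX unfolding Y_def by blast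
    moreover have "card (g ` b) = 3" using c3 card_image[OF inj_on_subset[OF ginj Bsub[OF b(1)]]] by simp
    ultimately show "b' \<subseteq> Y \<and> card b' = 3" using b(2) by simp
  qed
  have s3: "\<forall>y1\<in>Y. \<forall>y2\<in>Y. y1 \<noteq> y2 \<longrightarrow> (\<exists>!b'. b' \<in> B' \<and> {y1, y2} \<subseteq> b')"
  proof (intro ballI impI)
    fix y1 y2 assume y: "y1 \<in> Y" "y2 \<in> Y" "y1 \<noteq> y2"
    define x1 where "x1 = inv_into X g y1"
    define x2 where "x2 = inv_into X g y2"
    have yy: "y1 \<in> g ` X" "y2 \<in> g ` X" using y gX unfolding Y_def by auto
    have x: "x1 \<in> X" "x2 \<in> X" "g x1 = y1" "g x2 = y2"
      unfolding x1_def x2_def using yy by (simp_all add: inv_into_into f_inv_into_f)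
    have "x1 \<noteq> x2"
    proof
      assume "x1 = x2" then have "y1 = y2" using x(3,4) by simp
      thus False using y(3) by simp
    qed
    hence ex1: "\<exists>!b. b \<in> B \<and> {x1,x2} \<subseteq> b" by (rule pairs[OF x(1,2)])
    then obtain b where b12: "b \<in> B \<and> {x1,x2} \<subseteq> b" and u: "\<forall>c. c \<in> B \<and> {x1,x2} \<subseteq> c \<longrightarrow> c = b"
      by (rule ex1E)
    have b: "b \<in> B" "{x1,x2} \<subseteq> b" "\<And>c. c \<in> B \<Longrightarrow> {x1,x2} \<subseteq> c \<Longrightarrow> c = b"
      using b12 apply blast using b12 apply blast using u by blast
    show "\<exists>!b'. b' \<in> B' \<and> {y1, y2} \<subseteq> b'"
    proof (rule ex1I[of _ "g ` b"])
      have "g ` b \<in> B'" unfolding B'_def using b(1) by (rule imageI)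
      moreover have "g x1 \<in> g ` b" "g x2 \<in> g ` b" using b(2) by auto
      ultimately show "g ` b \<in> B' \<and> {y1, y2} \<subseteq> g ` b" using x(3,4) by simp
    next
      fix c' assume c': "c' \<in> B' \<and> {y1, y2} \<subseteq> c'"
      then obtain c where c: "c \<in> B" "c' = g ` c" unfolding B'_def by blast
      have "y1 \<in> g ` c" "y2 \<in> g ` c" using c c' by auto
      hence "x1 \<in> c" "x2 \<in> c" using x Bsub[OF c(1)] ginj unfolding inj_on_def by blast+
      thus "c' = g ` b" using b(3)[OF c(1)] c by auto
    qed
  qed
  have sts: "is_sts Y B'" unfolding is_sts_def by (rule conjI[OF s1 conjI[OF s2 s3]])
  have f1: "\<forall>b'\<in>B'. F' b' \<noteq> 0 \<and> \<bar>F' b'\<bar> \<le> int k - 1"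
  proof
    fix b' assume "b' \<in> B'"
    then obtain b where b: "b \<in> B" "b' = g ` b" unfolding B'_def by blast
    show "F' b' \<noteq> 0 \<and> \<bar>F' b'\<bar> \<le> int k - 1"
      using F b gback unfolding F'_def is_zero_sum_flow_def by auto
  qed
  have f2: "\<forall>y\<in>Y. (\<Sum>b'\<in>{b' \<in> B'. y \<in> b'}. F' b') = 0"
  proof
    fix y assume y: "y \<in> Y"
    define x where "x = inv_into X g y"
    have x: "x \<in> X" "g x = y" using y gX unfolding x_def Y_def by (auto simp: inv_into_into f_inv_into_f)
    have eq: "{b' \<in> B'. y \<in> b'} = (\<lambda>b. g ` b) ` {b \<in> B. x \<in> b}"
    proof -
      have "\<And>b. b \<in> B \<Longrightarrow> (y \<in> g ` b) = (x \<in> b)"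
        using x Bsub ginj unfolding inj_on_def by blast
      thus ?thesis unfolding B'_def by auto
    qed
    have sub: "{b \<in> B. x \<in> b} \<subseteq> B" by blast
    have "(\<Sum>b'\<in>{b' \<in> B'. y \<in> b'}. F' b') = (\<Sum>b\<in>{b \<in> B. x \<in> b}. F' (g ` b))"
      unfolding eq sum.reindex[OF inj_on_subset[OF injB sub]] o_def by (rule refl)
    also have "\<dots> = (\<Sum>b\<in>{b \<in> B. x \<in> b}. F b)"
      by (rule sum.cong) (auto simp: F'_def gback)
    also have "\<dots> = 0" using F x unfolding is_zero_sum_flow_def by blast
    finally show "(\<Sum>b'\<in>{b' \<in> B'. y \<in> b'}. F' b') = 0" .
  qed
  have flow: "is_zero_sum_flow Y B' k F'" unfolding is_zero_sum_flow_def by (rule conjI[OF f1 f2])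
  show ?thesis
    by (rule exI[of _ Y], rule exI[of _ B']) (use sts flow in \<open>auto simp: Y_def has_zero_sum_flow_def\<close>)
qed



locale two_sts =
  fixes X1 :: "'a set" and B1 :: "'a set set" and X2 :: "'b set" and B2 :: "'b set set"
  assumes S1: "is_sts X1 B1" and S2: "is_sts X2 B2"
begin

lemma B1sub: "b \<in> B1 \<Longrightarrow> b \<subseteq> X1" using sts_blocks(1)[OF S1] .
lemma B1card: "b \<in> B1 \<Longrightarrow> card b = 3" using sts_blocks(2)[OF S1] .
lemma B2sub: "b \<in> B2 \<Longrightarrow> b \<subseteq> X2" using sts_blocks(1)[OF S2] .
lemma B2card: "b \<in> B2 \<Longrightarrow> card b = 3" using sts_blocks(2)[OF S2] .
lemma fin1: "finite X1" using sts_fin[OF S1] .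
lemma fin2: "finite X2" using sts_fin[OF S2] .
lemma finB1: "finite B1"
proof -
  have "B1 \<subseteq> Pow X1" using B1sub by blast
  thus ?thesis using fin1 finite_subset by blast
qed
lemma finB2: "finite B2"
proof -
  have "B2 \<subseteq> Pow X2" using B2sub by blast
  thus ?thesis using fin2 finite_subset by blast
qed

definition "T1 = (\<lambda>(b,a). b \<times> {a}) ` (B1 \<times> X2)"
definition "T2 = (\<lambda>(x,b). {x} \<times> b) ` (X1 \<times> B2)"
definition "I3 = B1 \<times> B2 \<times> {1,2::nat} \<times> {..<3::nat}"
definition "bk = (\<lambda>(b1,b2,c,j). blk b1 b2 c j)"
definition "T3 = bk ` I3"
definition "PB = T1 \<union> T2 \<union> T3"

lemma blk_mem:
  assumes "b1 \<in> B1" "b2 \<in> B2" "(y,e) \<in> blk b1 b2 c j"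
  shows "y \<in> b1" "e \<in> b2"
proof -
  obtain t where t: "t < 3" "(y,e) = (lab b1 t, lab b2 ((j + c*t) mod 3))"
    using assms(3) unfolding blk_def by blast
  show "y \<in> b1" using t lab_in[OF B1card[OF assms(1)]] by simp
  show "e \<in> b2" using t lab_in[OF B2card[OF assms(2)]] by simp
qed

lemma blk_pair:
  assumes "b1 \<in> B1" "b2 \<in> B2" "t < 3" "m < 3"
  shows "(lab b1 t, lab b2 m) \<in> blk b1 b2 c j \<longleftrightarrow> m = (j + c*t) mod 3"
proof
  assume "(lab b1 t, lab b2 m) \<in> blk b1 b2 c j"
  then obtain t' where t': "t' < 3" "lab b1 t = lab b1 t'" "lab b2 m = lab b2 ((j + c*t') mod 3)"
    unfolding blk_def by blast
  have "t = t'" using lab_inj[OF B1card[OF assms(1)] assms(3) t'(1) t'(2)] .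
  moreover have "m = (j + c*t') mod 3"
    using lab_inj[OF B2card[OF assms(2)] assms(4) _ t'(3)] by simp
  ultimately show "m = (j + c*t) mod 3" by simp
next
  assume "m = (j + c*t) mod 3"
  thus "(lab b1 t, lab b2 m) \<in> blk b1 b2 c j" unfolding blk_def using assms(3) by blast
qed

lemma blk_sub: "b1 \<in> B1 \<Longrightarrow> b2 \<in> B2 \<Longrightarrow> blk b1 b2 c j \<subseteq> X1 \<times> X2"
  using blk_mem B1sub B2sub by fast

lemma blk_card: assumes "b1 \<in> B1" "b2 \<in> B2" shows "card (blk b1 b2 c j) = 3"
proof -
  have "inj_on (\<lambda>t. (lab b1 t, lab b2 ((j + c*t) mod 3))) {..<3}"
    using lab_inj[OF B1card[OF assms(1)]] unfolding inj_on_def by blast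
  thus ?thesis unfolding blk_def by (simp add: card_image)
qed

lemma blk_two:
  assumes "b1 \<in> B1" "b2 \<in> B2" "c = 1 \<or> c = 2" "j < 3"
  shows "(lab b1 0, lab b2 j) \<in> blk b1 b2 c j" "(lab b1 1, lab b2 ((j+c) mod 3)) \<in> blk b1 b2 c j"
    "lab b1 0 \<noteq> lab b1 1" "lab b2 j \<noteq> lab b2 ((j+c) mod 3)"
proof -
  show "(lab b1 0, lab b2 j) \<in> blk b1 b2 c j" using blk_pair[OF assms(1,2), of 0 j] assms(4) by simp
  show "(lab b1 1, lab b2 ((j+c) mod 3)) \<in> blk b1 b2 c j" using blk_pair[OF assms(1,2), of 1 "(j+c) mod 3"] by simp
  show "lab b1 0 \<noteq> lab b1 1"
  proof
    assume h: "lab b1 0 = lab b1 1"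
    have "(0::nat) = 1" by (rule lab_inj[OF B1card[OF assms(1)] _ _ h]) simp_all
    thus False by simp
  qed
  have "j \<noteq> (j+c) mod 3" using three_cases[OF assms(4)] assms(3) by (elim disjE) simp_all
  moreover have "(j+c) mod 3 < 3" by simp
  ultimately show "lab b2 j \<noteq> lab b2 ((j+c) mod 3)" using lab_inj[OF B2card[OF assms(2)], of j "(j+c) mod 3"] assms(4) by blast
qed

lemma B1uniq: "b \<in> B1 \<Longrightarrow> b' \<in> B1 \<Longrightarrow> x \<in> b \<Longrightarrow> y \<in> b \<Longrightarrow> x \<in> b' \<Longrightarrow> y \<in> b' \<Longrightarrow> x \<noteq> y \<Longrightarrow> b = b'"
  by (rule sts_uniq[OF S1])
lemma B2uniq: "b \<in> B2 \<Longrightarrow> b' \<in> B2 \<Longrightarrow> x \<in> b \<Longrightarrow> y \<in> b \<Longrightarrow> x \<in> b' \<Longrightarrow> y \<in> b' \<Longrightarrow> x \<noteq> y \<Longrightarrow> b = b'"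
  by (rule sts_uniq[OF S2])

lemma blk_eq:
  assumes "(b1,b2,c,j) \<in> I3" "(b1',b2',c',j') \<in> I3" "blk b1 b2 c j = blk b1' b2' c' j'"
  shows "b1 = b1' \<and> b2 = b2' \<and> c = c' \<and> j = j'"
proof -
  have a: "b1 \<in> B1" "b2 \<in> B2" "c = 1 \<or> c = 2" "j < 3" using assms(1) unfolding I3_def by auto
  have a': "b1' \<in> B1" "b2' \<in> B2" "c' = 1 \<or> c' = 2" "j' < 3" using assms(2) unfolding I3_def by auto
  note tw = blk_two[OF a]
  have p1: "(lab b1 0, lab b2 j) \<in> blk b1' b2' c' j'" using tw(1) assms(3) by simp
  have p2: "(lab b1 1, lab b2 ((j+c) mod 3)) \<in> blk b1' b2' c' j'" using tw(2) assms(3) by simp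
  have e1: "b1 = b1'"
    by (rule B1uniq[OF a(1) a'(1) _ _ blk_mem(1)[OF a'(1,2) p1] blk_mem(1)[OF a'(1,2) p2] tw(3)])
       (use lab_in[OF B1card[OF a(1)]] in simp_all)
  have e2: "b2 = b2'"
    by (rule B2uniq[OF a(2) a'(2) _ _ blk_mem(2)[OF a'(1,2) p1] blk_mem(2)[OF a'(1,2) p2] tw(4)])
       (use lab_in[OF B2card[OF a(2)]] a(4) in simp_all)
  have q1: "j = (j' + c'*0) mod 3" using blk_pair[OF a'(1,2), of 0 j] p1 a(4) e1 e2 by simp
  have q2: "(j+c) mod 3 = (j' + c'*1) mod 3" using blk_pair[OF a'(1,2), of 1 "(j+c) mod 3"] p2 e1 e2 by simp
  have "c = c' \<and> j = j'"
    using arith_uniq[of 0 1 c j c' j'] a(3,4) a'(3,4) q1 q2 by simp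
  thus ?thesis using e1 e2 by simp
qed

lemma bk_inj: "inj_on bk I3"
proof (rule inj_onI)
  fix i i' assume "i \<in> I3" "i' \<in> I3" "bk i = bk i'"
  moreover obtain b1 b2 c j where "i = (b1,b2,c,j)" by (cases i) auto
  moreover obtain b1' b2' c' j' where "i' = (b1',b2',c',j')" by (cases i') auto
  ultimately show "i = i'" using blk_eq unfolding bk_def by auto
qed


lemma inj_tab: "\<forall>t\<in>{0,1,2::nat}. \<forall>t'\<in>{0,1,2::nat}. \<forall>c\<in>{1,2::nat}. \<forall>j\<in>{0,1,2::nat}.
   (j+c*t) mod 3 = (j+c*t') mod 3 \<longrightarrow> t = t'"
  by simp

lemma ex_pair1: "x \<in> X1 \<Longrightarrow> y \<in> X1 \<Longrightarrow> x \<noteq> y \<Longrightarrow> \<exists>b. b \<in> B1 \<and> x \<in> b \<and> y \<in> b"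
proof -
  assume a: "x \<in> X1" "y \<in> X1" "x \<noteq> y"
  from sts_pairs[OF S1 a] obtain b where "b \<in> B1 \<and> {x,y} \<subseteq> b" by (rule ex1E)
  thus ?thesis by blast
qed
lemma ex_pair2: "x \<in> X2 \<Longrightarrow> y \<in> X2 \<Longrightarrow> x \<noteq> y \<Longrightarrow> \<exists>b. b \<in> B2 \<and> x \<in> b \<and> y \<in> b"
proof -
  assume a: "x \<in> X2" "y \<in> X2" "x \<noteq> y"
  from sts_pairs[OF S2 a] obtain b where "b \<in> B2 \<and> {x,y} \<subseteq> b" by (rule ex1E)
  thus ?thesis by blast
qed

lemma PB_cases:
  assumes "bl \<in> PB"
  obtains (t1) b a where "b \<in> B1" "a \<in> X2" "bl = b \<times> {a}"
  | (t2) x b where "x \<in> X1" "b \<in> B2" "bl = {x} \<times> b"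
  | (t3) b1 b2 c j where "b1 \<in> B1" "b2 \<in> B2" "c = 1 \<or> c = 2" "j < 3" "bl = blk b1 b2 c j"
proof -
  consider "bl \<in> T1" | "bl \<in> T2" | "bl \<in> T3" using assms unfolding PB_def by blast
  thus thesis
  proof cases
    case 1
    then obtain b a where "b \<in> B1" "a \<in> X2" "bl = b \<times> {a}" unfolding T1_def by blast
    thus thesis by (rule that(1))
  next
    case 2
    then obtain x b where "x \<in> X1" "b \<in> B2" "bl = {x} \<times> b" unfolding T2_def by blast
    thus thesis by (rule that(2))
  next
    case 3
    then obtain i where i: "i \<in> I3" "bl = bk i" unfolding T3_def by blast
    obtain b1 b2 c j where ii: "i = (b1,b2,c,j)" by (cases i)
    have "b1 \<in> B1" "b2 \<in> B2" "c \<in> {1,2}" "j < 3" using i(1) ii unfolding I3_def by auto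
    moreover have "bl = blk b1 b2 c j" using i(2) ii unfolding bk_def by simp
    moreover have "c = 1 \<or> c = 2" using \<open>c \<in> {1,2}\<close> by blast
    ultimately show thesis using that(3) by blast
  qed
qed

lemma blk_same_fst:
  assumes "b1 \<in> B1" "b2 \<in> B2" "c = 1 \<or> c = 2" "j < 3"
    "(x,a) \<in> blk b1 b2 c j" "(x,e) \<in> blk b1 b2 c j"
  shows "a = e"
proof -
  obtain t where t: "t < 3" "(x,a) = (lab b1 t, lab b2 ((j + c*t) mod 3))"
    using assms(5) unfolding blk_def by blast
  obtain t' where t': "t' < 3" "(x,e) = (lab b1 t', lab b2 ((j + c*t') mod 3))"
    using assms(6) unfolding blk_def by blast
  have "lab b1 t = lab b1 t'" using t t' by simp
  hence "t = t'" by (rule lab_inj[OF B1card[OF assms(1)] t(1) t'(1)])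
  thus ?thesis using t t' by simp
qed

lemma blk_same_snd:
  assumes "b1 \<in> B1" "b2 \<in> B2" "c = 1 \<or> c = 2" "j < 3"
    "(x,a) \<in> blk b1 b2 c j" "(y,a) \<in> blk b1 b2 c j"
  shows "x = y"
proof -
  obtain t where t: "t < 3" "(x,a) = (lab b1 t, lab b2 ((j + c*t) mod 3))"
    using assms(5) unfolding blk_def by blast
  obtain t' where t': "t' < 3" "(y,a) = (lab b1 t', lab b2 ((j + c*t') mod 3))"
    using assms(6) unfolding blk_def by blast
  have "lab b2 ((j + c*t) mod 3) = lab b2 ((j + c*t') mod 3)" using t t' by simp
  hence eq: "(j + c*t) mod 3 = (j + c*t') mod 3" by (rule lab_inj[OF B2card[OF assms(2)], rotated 2]) simp_all
  have i: "t\<in>{0,1,2}" "t'\<in>{0,1,2}" "c\<in>{1,2}" "j\<in>{0,1,2}" using t(1) t'(1) assms(3,4) by auto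
  have "t = t'" using inj_tab[rule_format, OF i eq] .
  thus ?thesis using t t' by simp
qed

lemma caseA:
  assumes "x \<in> X1" "a \<noteq> e" "bl \<in> PB" "(x,a) \<in> bl" "(x,e) \<in> bl"
  shows "\<exists>b\<in>B2. bl = {x} \<times> b \<and> a \<in> b \<and> e \<in> b"
  using assms(3)
proof (cases rule: PB_cases)
  case (t1 b a')
  thus ?thesis using assms(2,4,5) by blast
next
  case (t2 x' b)
  thus ?thesis using assms(4,5) by blast
next
  case (t3 b1 b2 c j)
  thus ?thesis using blk_same_fst[OF t3(1-4)] assms(2,4,5) by blast
qed

lemma caseB:
  assumes "a \<in> X2" "x \<noteq> y" "bl \<in> PB" "(x,a) \<in> bl" "(y,a) \<in> bl"
  shows "\<exists>b\<in>B1. bl = b \<times> {a} \<and> x \<in> b \<and> y \<in> b"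
  using assms(3)
proof (cases rule: PB_cases)
  case (t1 b a')
  thus ?thesis using assms(4,5) by blast
next
  case (t2 x' b)
  thus ?thesis using assms(2,4,5) by blast
next
  case (t3 b1 b2 c j)
  thus ?thesis using blk_same_snd[OF t3(1-4)] assms(2,4,5) by blast
qed

lemma caseC:
  assumes "x \<noteq> y" "a \<noteq> e" "bl \<in> PB" "(x,a) \<in> bl" "(y,e) \<in> bl"
  shows "\<exists>b1 b2 c j. b1 \<in> B1 \<and> b2 \<in> B2 \<and> (c = 1 \<or> c = 2) \<and> j < 3 \<and> bl = blk b1 b2 c j"
  using assms(3)
proof (cases rule: PB_cases)
  case (t1 b a')
  thus ?thesis using assms(2,4,5) by blast
next
  case (t2 x' b)
  thus ?thesis using assms(1,4,5) by blast
next
  case (t3 b1 b2 c j)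
  thus ?thesis by blast
qed

lemma C_uniq:
  assumes "x \<noteq> y" "a \<noteq> e"
    "b1 \<in> B1" "b2 \<in> B2" "c = 1 \<or> c = 2" "j < 3"
    "b1' \<in> B1" "b2' \<in> B2" "c' = 1 \<or> c' = 2" "j' < 3"
    "(x,a) \<in> blk b1 b2 c j" "(y,e) \<in> blk b1 b2 c j"
    "(x,a) \<in> blk b1' b2' c' j'" "(y,e) \<in> blk b1' b2' c' j'"
  shows "blk b1 b2 c j = blk b1' b2' c' j'"
proof -
  have e1: "b1 = b1'"
    using B1uniq[OF assms(3,7) blk_mem(1)[OF assms(3,4,11)] blk_mem(1)[OF assms(3,4,12)]
      blk_mem(1)[OF assms(7,8,13)] blk_mem(1)[OF assms(7,8,14)] assms(1)] .
  have e2: "b2 = b2'"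
    using B2uniq[OF assms(4,8) blk_mem(2)[OF assms(3,4,11)] blk_mem(2)[OF assms(3,4,12)]
      blk_mem(2)[OF assms(7,8,13)] blk_mem(2)[OF assms(7,8,14)] assms(2)] .
  obtain t where t: "t < 3" "x = lab b1 t" using lab_surj[OF B1card[OF assms(3)] blk_mem(1)[OF assms(3,4,11)]] by blast
  obtain t' where t': "t' < 3" "y = lab b1 t'" using lab_surj[OF B1card[OF assms(3)] blk_mem(1)[OF assms(3,4,12)]] by blast
  obtain m where m: "m < 3" "a = lab b2 m" using lab_surj[OF B2card[OF assms(4)] blk_mem(2)[OF assms(3,4,11)]] by blast
  obtain m' where m': "m' < 3" "e = lab b2 m'" using lab_surj[OF B2card[OF assms(4)] blk_mem(2)[OF assms(3,4,12)]] by blast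
  have tt: "t \<noteq> t'" using t t' assms(1) by blast
  have h1: "m = (j + c*t) mod 3" using blk_pair[OF assms(3,4) t(1) m(1)] assms(11) t m by simp
  have h2: "m' = (j + c*t') mod 3" using blk_pair[OF assms(3,4) t'(1) m'(1)] assms(12) t' m' by simp
  have h3: "m = (j' + c'*t) mod 3" using blk_pair[OF assms(3,4) t(1) m(1)] assms(13) t m e1 e2 by simp
  have h4: "m' = (j' + c'*t') mod 3" using blk_pair[OF assms(3,4) t'(1) m'(1)] assms(14) t' m' e1 e2 by simp
  have "c = c' \<and> j = j'" using arith_uniq[OF t(1) t'(1) tt assms(5,6,9,10)] h1 h2 h3 h4 by simp
  thus ?thesis using e1 e2 by simp
qed

lemma T2_in: "x \<in> X1 \<Longrightarrow> b \<in> B2 \<Longrightarrow> {x} \<times> b \<in> PB"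
  unfolding PB_def T2_def by blast
lemma T1_in: "b \<in> B1 \<Longrightarrow> a \<in> X2 \<Longrightarrow> b \<times> {a} \<in> PB"
  unfolding PB_def T1_def by blast
lemma T3_in: "b1 \<in> B1 \<Longrightarrow> b2 \<in> B2 \<Longrightarrow> c = 1 \<or> c = 2 \<Longrightarrow> j < 3 \<Longrightarrow> blk b1 b2 c j \<in> PB"
  unfolding PB_def T3_def I3_def bk_def by force

lemma PB_sts: "is_sts (X1 \<times> X2) PB"
proof (rule sts_intro)
  show "finite (X1 \<times> X2)" using fin1 fin2 by simp
next
  fix b assume "b \<in> PB"
  thus "b \<subseteq> X1 \<times> X2"
  proof (cases rule: PB_cases)
    case (t1 b' a) thus ?thesis using B1sub[OF t1(1)] by blast
  next
    case (t2 x b') thus ?thesis using B2sub[OF t2(2)] by blast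
  next
    case (t3 b1 b2 c j) thus ?thesis using blk_sub[OF t3(1,2)] by simp
  qed
next
  fix b assume "b \<in> PB"
  thus "card b = 3"
  proof (cases rule: PB_cases)
    case (t1 b' a) thus ?thesis using B1card[OF t1(1)] by (simp add: card_cartesian_product)
  next
    case (t2 x b') thus ?thesis using B2card[OF t2(2)] by (simp add: card_cartesian_product)
  next
    case (t3 b1 b2 c j) thus ?thesis using blk_card by simp
  qed
next
  fix P Q assume P: "P \<in> X1 \<times> X2" and Q: "Q \<in> X1 \<times> X2" and PQ: "P \<noteq> Q"
  obtain x a where xa: "P = (x,a)" by (cases P) auto
  obtain y e where ye: "Q = (y,e)" by (cases Q) auto
  have xX: "x \<in> X1" "a \<in> X2" "y \<in> X1" "e \<in> X2" using P Q xa ye by auto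
  show "\<exists>b\<in>PB. {P, Q} \<subseteq> b"
  proof (cases "x = y")
    case True
    hence "a \<noteq> e" using PQ xa ye by simp
    then obtain b where b: "b \<in> B2" "a \<in> b" "e \<in> b" using ex_pair2[OF xX(2) xX(4)] by blast
    have "{P,Q} \<subseteq> {x} \<times> b" using b xa ye True by simp
    thus ?thesis using T2_in[OF xX(1) b(1)] by blast
  next
    case False
    show ?thesis
    proof (cases "a = e")
      case True
      then obtain b where b: "b \<in> B1" "x \<in> b" "y \<in> b" using ex_pair1[OF xX(1) xX(3) False] by blast
      have "{P,Q} \<subseteq> b \<times> {a}" using b xa ye True by simp
      thus ?thesis using T1_in[OF b(1) xX(2)] by blast
    next
      case ae: False
      obtain b1 where b1: "b1 \<in> B1" "x \<in> b1" "y \<in> b1" using ex_pair1[OF xX(1) xX(3) False] by blast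
      obtain b2 where b2: "b2 \<in> B2" "a \<in> b2" "e \<in> b2" using ex_pair2[OF xX(2) xX(4) ae] by blast
      obtain t where t: "t < 3" "x = lab b1 t" using lab_surj[OF B1card[OF b1(1)] b1(2)] by blast
      obtain t' where t': "t' < 3" "y = lab b1 t'" using lab_surj[OF B1card[OF b1(1)] b1(3)] by blast
      obtain m where m: "m < 3" "a = lab b2 m" using lab_surj[OF B2card[OF b2(1)] b2(2)] by blast
      obtain m' where m': "m' < 3" "e = lab b2 m'" using lab_surj[OF B2card[OF b2(1)] b2(3)] by blast
      have tt: "t \<noteq> t'"
      proof
        assume "t = t'" hence "x = y" using t(2) t'(2) by simp
        thus False using False by simp
      qed
      have mm: "m \<noteq> m'"
      proof
        assume "m = m'" hence "a = e" using m(2) m'(2) by simp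
        thus False using ae by simp
      qed
      obtain c j where cj: "c = 1 \<or> c = 2" "j < 3" "m = (j+c*t) mod 3" "m' = (j+c*t') mod 3"
        using arith_ex[OF t(1) t'(1) m(1) m'(1) tt mm] by blast
      have "P \<in> blk b1 b2 c j" using blk_pair[OF b1(1) b2(1) t(1) m(1)] cj(3) xa t m by simp
      moreover have "Q \<in> blk b1 b2 c j" using blk_pair[OF b1(1) b2(1) t'(1) m'(1)] cj(4) ye t' m' by simp
      ultimately show ?thesis using T3_in[OF b1(1) b2(1) cj(1,2)] by blast
    qed
  qed
next
  fix P Q b b' assume P: "P \<in> X1 \<times> X2" and Q: "Q \<in> X1 \<times> X2" and PQ: "P \<noteq> Q"
    and bb: "b \<in> PB" "b' \<in> PB" "{P,Q} \<subseteq> b" "{P,Q} \<subseteq> b'"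
  obtain x a where xa: "P = (x,a)" by (cases P) auto
  obtain y e where ye: "Q = (y,e)" by (cases Q) auto
  have xX: "x \<in> X1" "a \<in> X2" "y \<in> X1" "e \<in> X2" using P Q xa ye by auto
  have m: "(x,a) \<in> b" "(y,e) \<in> b" "(x,a) \<in> b'" "(y,e) \<in> b'" using bb xa ye by auto
  show "b = b'"
  proof (cases "x = y")
    case True
    hence ae: "a \<noteq> e" using PQ xa ye by simp
    have m2: "(x,e) \<in> b" "(x,e) \<in> b'" using m(2,4) True by simp_all
    obtain c where c: "c \<in> B2" "b = {x} \<times> c" "a \<in> c" "e \<in> c"
      using caseA[OF xX(1) ae bb(1) m(1) m2(1)] by blast
    obtain c' where c': "c' \<in> B2" "b' = {x} \<times> c'" "a \<in> c'" "e \<in> c'"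
      using caseA[OF xX(1) ae bb(2) m(3) m2(2)] by blast
    show ?thesis using B2uniq[OF c(1) c'(1) c(3,4) c'(3,4) ae] c(2) c'(2) by simp
  next
    case False
    show ?thesis
    proof (cases "a = e")
      case True
      have m2: "(y,a) \<in> b" "(y,a) \<in> b'" using m(2,4) True by simp_all
      obtain c where c: "c \<in> B1" "b = c \<times> {a}" "x \<in> c" "y \<in> c"
        using caseB[OF xX(2) False bb(1) m(1) m2(1)] by blast
      obtain c' where c': "c' \<in> B1" "b' = c' \<times> {a}" "x \<in> c'" "y \<in> c'"
        using caseB[OF xX(2) False bb(2) m(3) m2(2)] by blast
      show ?thesis using B1uniq[OF c(1) c'(1) c(3,4) c'(3,4) False] c(2) c'(2) by simp
    next
      case ae: False
      obtain b1 b2 c j where k: "b1 \<in> B1" "b2 \<in> B2" "c = 1 \<or> c = 2" "j < 3" "b = blk b1 b2 c j"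
        using caseC[OF False ae bb(1) m(1,2)] by blast
      obtain b1' b2' c' j' where k': "b1' \<in> B1" "b2' \<in> B2" "c' = 1 \<or> c' = 2" "j' < 3" "b' = blk b1' b2' c' j'"
        using caseC[OF False ae bb(2) m(3,4)] by blast
      have mm: "(x,a) \<in> blk b1 b2 c j" "(y,e) \<in> blk b1 b2 c j" "(x,a) \<in> blk b1' b2' c' j'" "(y,e) \<in> blk b1' b2' c' j'"
        using m k(5) k'(5) by simp_all
      show ?thesis using C_uniq[OF False ae k(1-4) k'(1-4) mm] k(5) k'(5) by simp
    qed
  qed
qed

end


lemma sum_times: "(\<Sum>i\<in>A\<times>B. h i) = (\<Sum>a\<in>A. \<Sum>b\<in>B. h (a,b))"
  by (simp add: sum.cartesian_product)

lemma sum_single: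
  assumes "finite A" "b0 \<in> A" "\<And>b. b \<in> A \<Longrightarrow> b \<noteq> b0 \<Longrightarrow> g b = (0::int)"
  shows "sum g A = g b0"
proof -
  have "sum g A = g b0 + sum g (A - {b0})" using sum.remove[OF assms(1,2)] .
  moreover have "sum g (A - {b0}) = 0" using assms(3) by (intro sum.neutral) blast
  ultimately show ?thesis by simp
qed

context two_sts
begin

lemma T_disj12: "T1 \<inter> T2 = {}"
proof (rule ccontr)
  assume "T1 \<inter> T2 \<noteq> {}"
  then obtain bl where "bl \<in> T1" "bl \<in> T2" by blast
  obtain b a where h1: "b \<in> B1" "bl = b \<times> {a}" "a \<in> X2" using \<open>bl \<in> T1\<close> unfolding T1_def by auto
  obtain x b' where h2: "bl = {x} \<times> b'" "x \<in> X1" "b' \<in> B2" using \<open>bl \<in> T2\<close> unfolding T2_def by auto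
  have "lab b 0 \<in> b" "lab b 1 \<in> b" using lab_in[OF B1card[OF h1(1)]] by simp_all
  hence "(lab b 0, a) \<in> bl" "(lab b 1, a) \<in> bl" using h1(2) by simp_all
  hence "lab b 0 = x" "lab b 1 = x" unfolding h2(1) by simp_all
  hence "lab b 0 = lab b 1" by simp
  moreover have "lab b 0 \<noteq> lab b 1"
  proof
    assume h': "lab b 0 = lab b 1"
    have "(0::nat) = 1" by (rule lab_inj[OF B1card[OF h1(1)] _ _ h']) simp_all
    thus False by simp
  qed
  ultimately show False by simp
qed

lemma T3_blk: "i \<in> I3 \<Longrightarrow> \<exists>b1 b2 c j. i = (b1,b2,c,j) \<and> b1 \<in> B1 \<and> b2 \<in> B2 \<and> (c = 1 \<or> c = 2) \<and> j < 3 \<and> bk i = blk b1 b2 c j"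
  unfolding I3_def bk_def by auto

lemma T_disj13: "bl \<in> T3 \<Longrightarrow> bl \<notin> T1"
proof
  assume a: "bl \<in> T3" "bl \<in> T1"
  then obtain i where i: "i \<in> I3" "bl = bk i" unfolding T3_def by blast
  then obtain b1 b2 c j where k: "b1 \<in> B1" "b2 \<in> B2" "c = 1 \<or> c = 2" "j < 3" "bl = blk b1 b2 c j"
    using T3_blk by blast
  obtain b a' where h: "bl = b \<times> {a'}" "b \<in> B1" "a' \<in> X2" using a(2) unfolding T1_def by auto
  note tw = blk_two[OF k(1-4)]
  have "lab b2 j = a'" "lab b2 ((j+c) mod 3) = a'" using tw(1,2) k(5) h(1) by auto
  thus False using tw(4) by simp
qed

lemma T_disj23: "bl \<in> T3 \<Longrightarrow> bl \<notin> T2"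
proof
  assume a: "bl \<in> T3" "bl \<in> T2"
  then obtain i where i: "i \<in> I3" "bl = bk i" unfolding T3_def by blast
  then obtain b1 b2 c j where k: "b1 \<in> B1" "b2 \<in> B2" "c = 1 \<or> c = 2" "j < 3" "bl = blk b1 b2 c j"
    using T3_blk by blast
  obtain x b where h: "bl = {x} \<times> b" "x \<in> X1" "b \<in> B2" using a(2) unfolding T2_def by auto
  note tw = blk_two[OF k(1-4)]
  have "lab b1 0 = x" "lab b1 1 = x" using tw(1,2) k(5) h(1) by auto
  thus False using tw(3) by simp
qed

lemma finI3: "finite I3" unfolding I3_def using finB1 finB2 by simp
lemma finT1: "finite T1" unfolding T1_def using finB1 fin2 by simp
lemma finT2: "finite T2" unfolding T2_def using finB2 fin1 by simp
lemma finT3: "finite T3" unfolding T3_def using finI3 by simp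

end

locale flow_ctx = two_sts X1 B1 X2 B2
  for X1 :: "'a set" and B1 and X2 :: "'b set" and B2 +
  fixes k :: nat and f :: "'a set \<Rightarrow> int" and p :: 'a and S :: "'a set set"
  assumes flow: "is_zero_sum_flow X1 B1 k f" and k3: "k \<ge> 3" and pX: "p \<in> X1"
    and Ssub: "S \<subseteq> {b\<in>B1. p\<in>b}" and Scard: "card S = (card {b\<in>B1. p\<in>b} - 1) div 2"
    and starne: "{b\<in>B1. p\<in>b} \<noteq> {}"
begin

definition mu :: "'a set \<Rightarrow> int" where
  "mu b = (if b \<in> B1 \<and> p \<in> b then (if b \<in> S then -1 else 1) else 0)"
definition N :: "'a \<Rightarrow> int" where
  "N x = (\<Sum>b\<in>{b\<in>B1. x\<in>b}. mu b)"
definition al :: "'a set \<Rightarrow> int" where "al b = (if mu b = 1 then 2 else 1)"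
definition be :: "'a set \<Rightarrow> int" where "be b = (if mu b = -1 then -2 else -1)"
definition val :: "'a set \<times> 'b set \<times> nat \<times> nat \<Rightarrow> int" where
  "val i = (case i of (b1,b2,c,j) \<Rightarrow> if c = 1 then al b1 else be b1)"
definition FF :: "('a \<times> 'b) set \<Rightarrow> int" where
  "FF bl = (if bl \<in> T1 then f (fst ` bl) else if bl \<in> T2 then - N (fst (SOME q. q \<in> bl))
            else val (the_inv_into I3 bk bl))"

lemma al_be: "al b + be b = mu b"
  unfolding al_def be_def mu_def by auto

lemma al_vals: "al b = 1 \<or> al b = 2" unfolding al_def by auto
lemma be_vals: "be b = -1 \<or> be b = -2" unfolding be_def by auto

lemma N_p: "N p = 1 \<or> N p = 2"
proof -
  define st where "st = {b\<in>B1. p\<in>b}"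
  have fst': "finite st" unfolding st_def using finB1 by simp
  have finS: "finite S" using finite_subset[OF Ssub] fst' unfolding st_def by blast
  have "N p = (\<Sum>b\<in>st. if b \<in> S then -1 else 1)"
    unfolding N_def st_def by (rule sum.cong) (auto simp: mu_def)
  also have "\<dots> = (\<Sum>b\<in>st \<inter> {b. b \<in> S}. -1) + (\<Sum>b\<in>st \<inter> - {b. b \<in> S}. 1)"
    by (rule sum.If_cases[OF fst'])
  also have "st \<inter> {b. b \<in> S} = S" using Ssub unfolding st_def by blast
  also have "st \<inter> - {b. b \<in> S} = st - S" by blast
  finally have e: "N p = - int (card S) + int (card (st - S))" by simp
  have "card (st - S) = card st - card S" using card_Diff_subset[OF finS] Ssub unfolding st_def by blast
  moreover have "card st \<ge> 1" using starne fst' unfolding st_def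
    by (metis One_nat_def Suc_leI card_gt_0_iff)
  moreover have "card S = (card st - 1) div 2" using Scard unfolding st_def .
  ultimately have "card (st - S) = card S + 1 \<or> card (st - S) = card S + 2" by presburger
  thus ?thesis using e by auto
qed

lemma N_other: assumes "x \<in> X1" "x \<noteq> p" shows "N x = 1 \<or> N x = -1"
proof -
  obtain b0 where b0: "b0 \<in> B1" "x \<in> b0" "p \<in> b0" using ex_pair1[OF assms(1) pX assms(2)] by blast
  have "N x = mu b0"
    unfolding N_def
  proof (rule sum_single)
    show "finite {b \<in> B1. x \<in> b}" using finB1 by simp
    show "b0 \<in> {b \<in> B1. x \<in> b}" using b0 by simp
    fix b assume b: "b \<in> {b \<in> B1. x \<in> b}" "b \<noteq> b0"
    show "mu b = 0"
    proof (cases "p \<in> b")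
      case True
      have "b = b0" by (rule B1uniq[of b b0 x p]) (use b b0 True assms(2) in simp_all)
      thus ?thesis using b(2) by simp
    qed (simp add: mu_def)
  qed
  moreover have "mu b0 = (if b0 \<in> S then -1 else 1)" unfolding mu_def using b0 by simp
  ultimately show ?thesis by (cases "b0 \<in> S") simp_all
qed

lemma N_vals: assumes "x \<in> X1" shows "N x \<noteq> 0 \<and> \<bar>N x\<bar> \<le> 2"
proof (cases "x = p")
  case True
  have "N p \<noteq> 0 \<and> \<bar>N p\<bar> \<le> 2" using N_p by (elim disjE) simp_all
  thus ?thesis using True by simp
next
  case False show ?thesis using N_other[OF assms False] by (elim disjE) simp_all
qed


lemma val_simp: "val (b1,b2,c,j) = (if c = 1 then al b1 else be b1)" unfolding val_def by simp
lemma bk_simp: "bk (b1,b2,c,j) = blk b1 b2 c j" unfolding bk_def by simp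

lemma fst_img: "fst ` (b \<times> {a}) = b" by force
lemma snd_img: "snd ` ({x} \<times> b) = b" by force

lemma FF_T1: assumes "b \<in> B1" "a \<in> X2" shows "FF (b \<times> {a}) = f b"
proof -
  have "b \<times> {a} \<in> T1" unfolding T1_def using assms by force
  thus ?thesis unfolding FF_def by (simp add: fst_img)
qed

lemma FF_T2: assumes "x \<in> X1" "b \<in> B2" shows "FF ({x} \<times> b) = - N x"
proof -
  have i2: "{x} \<times> b \<in> T2" unfolding T2_def using assms by force
  hence n1: "{x} \<times> b \<notin> T1" using T_disj12 by blast
  have "b \<noteq> {}" using B2card[OF assms(2)] by auto
  then obtain e where "e \<in> b" by blast
  hence "\<exists>q. q \<in> {x} \<times> b" by blast
  hence "(SOME q. q \<in> {x} \<times> b) \<in> {x} \<times> b" by (rule someI_ex)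
  hence "fst (SOME q. q \<in> {x} \<times> b) = x" by auto
  thus ?thesis unfolding FF_def using i2 n1 by simp
qed

lemma FF_T3: assumes "i \<in> I3" shows "FF (bk i) = val i"
proof -
  have i3: "bk i \<in> T3" unfolding T3_def using assms by blast
  have "bk i \<notin> T1" "bk i \<notin> T2" using T_disj13[OF i3] T_disj23[OF i3] by simp_all
  moreover have "the_inv_into I3 bk (bk i) = i" by (rule the_inv_into_f_f[OF bk_inj assms])
  ultimately show ?thesis unfolding FF_def by simp
qed

lemma FF_bounds: assumes "bl \<in> PB" shows "FF bl \<noteq> 0 \<and> \<bar>FF bl\<bar> \<le> int k - 1"
  using assms
proof (cases rule: PB_cases)
  case (t1 b a)
  have "f b \<noteq> 0 \<and> \<bar>f b\<bar> \<le> int k - 1" using flow t1(1) unfolding is_zero_sum_flow_def by blast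
  thus ?thesis using FF_T1[OF t1(1,2)] t1(3) by simp
next
  case (t2 x b)
  have "N x \<noteq> 0 \<and> \<bar>N x\<bar> \<le> 2" by (rule N_vals[OF t2(1)])
  thus ?thesis using FF_T2[OF t2(1,2)] t2(3) k3 by simp
next
  case (t3 b1 b2 c j)
  have i: "(b1,b2,c,j) \<in> I3" unfolding I3_def using t3(1-4) by auto
  have "bl = bk (b1,b2,c,j)" unfolding bk_def using t3(5) by simp
  hence e: "FF bl = val (b1,b2,c,j)" using FF_T3[OF i] by simp
  have "val (b1,b2,c,j) = 1 \<or> val (b1,b2,c,j) = 2 \<or> val (b1,b2,c,j) = -1 \<or> val (b1,b2,c,j) = -2"
    unfolding val_def using al_vals[of b1] be_vals[of b1] by auto
  thus ?thesis using e k3 by auto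
qed

lemma inner3:
  assumes "b1 \<in> B1" "b2 \<in> B2"
  shows "(\<Sum>c\<in>{1,2::nat}. \<Sum>j<3. if (x,a) \<in> blk b1 b2 c j then (if c = 1 then al b1 else be b1) else 0)
    = (if x \<in> b1 \<and> a \<in> b2 then mu b1 else 0)"
proof (cases "x \<in> b1 \<and> a \<in> b2")
  case True
  obtain t where t: "t < 3" "x = lab b1 t" using lab_surj[OF B1card[OF assms(1)]] True by blast
  obtain m where m: "m < 3" "a = lab b2 m" using lab_surj[OF B2card[OF assms(2)]] True by blast
  have one: "(\<Sum>j<3. if (x,a) \<in> blk b1 b2 c j then v else 0) = v" if c: "c \<in> {1,2}" for c :: nat and v :: int
  proof -
    have "(\<Sum>j<3. if (x,a) \<in> blk b1 b2 c j then v else 0) = (\<Sum>j<3. if m = (j + c*t) mod 3 then v else 0)"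
      by (rule sum.cong) (use blk_pair[OF assms t(1) m(1)] t m in simp_all)
    also have "\<dots> = v" by (rule sum3[OF m(1) c t(1)])
    finally show ?thesis .
  qed
  have "(\<Sum>c\<in>{1,2::nat}. \<Sum>j<3. if (x,a) \<in> blk b1 b2 c j then (if c = 1 then al b1 else be b1) else 0)
     = (\<Sum>j<3. if (x,a) \<in> blk b1 b2 1 j then al b1 else 0) + (\<Sum>j<3. if (x,a) \<in> blk b1 b2 2 j then be b1 else 0)"
    by simp
  also have "\<dots> = al b1 + be b1" using one[of 1 "al b1"] one[of 2 "be b1"] by simp
  also have "\<dots> = mu b1" by (rule al_be)
  finally show ?thesis using True by simp
next
  case False
  have "(x,a) \<notin> blk b1 b2 c j" for c j using blk_mem[OF assms] False by blast
  thus ?thesis unfolding if_not_P[OF False] by simp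
qed

lemma FF_sum: assumes xX: "x \<in> X1" and aX: "a \<in> X2"
  shows "(\<Sum>bl\<in>{bl\<in>PB. (x,a)\<in>bl}. FF bl) = 0"
proof -
  define K where "K = card {b2\<in>B2. a\<in>b2}"
  define A1 where "A1 = {bl\<in>T1. (x,a)\<in>bl}"
  define A2 where "A2 = {bl\<in>T2. (x,a)\<in>bl}"
  define A3 where "A3 = {bl\<in>T3. (x,a)\<in>bl}"
  have split: "{bl\<in>PB. (x,a)\<in>bl} = A1 \<union> A2 \<union> A3" unfolding PB_def A1_def A2_def A3_def by blast
  have f1: "finite A1" unfolding A1_def using finT1 by simp
  have f2: "finite A2" unfolding A2_def using finT2 by simp
  have f3: "finite A3" unfolding A3_def using finT3 by simp
  have d12: "A1 \<inter> A2 = {}" unfolding A1_def A2_def using T_disj12 by blast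
  have d3: "(A1 \<union> A2) \<inter> A3 = {}" unfolding A1_def A2_def A3_def using T_disj13 T_disj23 by blast
  have "(\<Sum>bl\<in>{bl\<in>PB. (x,a)\<in>bl}. FF bl) = sum FF A1 + sum FF A2 + sum FF A3"
    unfolding split sum.union_disjoint[OF finite_UnI[OF f1 f2] f3 d3] sum.union_disjoint[OF f1 f2 d12] ..
  moreover have "sum FF A1 = 0"
  proof -
    have e: "A1 = (\<lambda>b. b \<times> {a}) ` {b\<in>B1. x\<in>b}"
    proof (rule equalityI)
      show "A1 \<subseteq> (\<lambda>b. b \<times> {a}) ` {b\<in>B1. x\<in>b}"
      proof
        fix bl assume "bl \<in> A1"
        hence h: "bl \<in> T1" "(x,a) \<in> bl" unfolding A1_def by simp_all
        obtain b a' where h1: "bl = b \<times> {a'}" "b \<in> B1" "a' \<in> X2" using h(1) unfolding T1_def by auto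
        have "x \<in> b" "a' = a" using h(2) h1(1) by simp_all
        thus "bl \<in> (\<lambda>b. b \<times> {a}) ` {b\<in>B1. x\<in>b}" using h1 by blast
      qed
    next
      show "(\<lambda>b. b \<times> {a}) ` {b\<in>B1. x\<in>b} \<subseteq> A1"
        unfolding A1_def T1_def using aX by force
    qed
    have inj: "inj_on (\<lambda>b. b \<times> {a}) {b\<in>B1. x\<in>b}"
      by (rule inj_onI) (metis fst_img)
    have "sum FF A1 = (\<Sum>b\<in>{b\<in>B1. x\<in>b}. FF (b \<times> {a}))"
      unfolding e sum.reindex[OF inj] o_def ..
    also have "\<dots> = (\<Sum>b\<in>{b\<in>B1. x\<in>b}. f b)"
      by (rule sum.cong) (simp_all add: FF_T1 aX)
    also have "\<dots> = 0" using flow xX unfolding is_zero_sum_flow_def by blast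
    finally show ?thesis .
  qed
  moreover have "sum FF A2 = of_nat K * (- N x)"
  proof -
    have e: "A2 = (\<lambda>b. {x} \<times> b) ` {b\<in>B2. a\<in>b}"
    proof (rule equalityI)
      show "A2 \<subseteq> (\<lambda>b. {x} \<times> b) ` {b\<in>B2. a\<in>b}"
      proof
        fix bl assume "bl \<in> A2"
        hence h: "bl \<in> T2" "(x,a) \<in> bl" unfolding A2_def by simp_all
        obtain x' b where h1: "bl = {x'} \<times> b" "x' \<in> X1" "b \<in> B2" using h(1) unfolding T2_def by auto
        have "a \<in> b" "x' = x" using h(2) h1(1) by simp_all
        thus "bl \<in> (\<lambda>b. {x} \<times> b) ` {b\<in>B2. a\<in>b}" using h1 by blast
      qed
    next
      show "(\<lambda>b. {x} \<times> b) ` {b\<in>B2. a\<in>b} \<subseteq> A2"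
        unfolding A2_def T2_def using xX by force
    qed
    have inj: "inj_on (\<lambda>b. {x} \<times> b) {b\<in>B2. a\<in>b}"
      by (rule inj_onI) (metis snd_img)
    have "sum FF A2 = (\<Sum>b\<in>{b\<in>B2. a\<in>b}. FF ({x} \<times> b))"
      unfolding e sum.reindex[OF inj] o_def ..
    also have "\<dots> = (\<Sum>b\<in>{b\<in>B2. a\<in>b}. - N x)"
      by (rule sum.cong) (simp_all add: FF_T2 xX)
    also have "\<dots> = of_nat K * (- N x)" unfolding K_def by simp
    finally show ?thesis .
  qed
  moreover have "sum FF A3 = of_nat K * N x"
  proof -
    define g where "g = (\<lambda>i. if (x,a) \<in> bk i then val i else 0)"
    have e: "A3 = bk ` {i\<in>I3. (x,a) \<in> bk i}" unfolding A3_def T3_def by blast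
    have inj: "inj_on bk {i\<in>I3. (x,a) \<in> bk i}" by (rule inj_on_subset[OF bk_inj]) blast
    have "sum FF A3 = (\<Sum>i\<in>{i\<in>I3. (x,a) \<in> bk i}. FF (bk i))"
      unfolding e sum.reindex[OF inj] o_def ..
    also have "\<dots> = (\<Sum>i\<in>{i\<in>I3. (x,a) \<in> bk i}. val i)"
      by (rule sum.cong) (simp_all add: FF_T3)
    also have "\<dots> = sum g I3" unfolding g_def by (rule sum.inter_filter[OF finI3])
    also have "\<dots> = (\<Sum>b1\<in>B1. \<Sum>b2\<in>B2. \<Sum>c\<in>{1,2::nat}. \<Sum>j<3. g (b1,b2,c,j))"
      unfolding I3_def sum_times ..
    also have "\<dots> = (\<Sum>b1\<in>B1. \<Sum>b2\<in>B2. if x \<in> b1 \<and> a \<in> b2 then mu b1 else 0)"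
    proof (rule sum.cong[OF refl], rule sum.cong[OF refl])
      fix b1 b2 assume "b1 \<in> B1" "b2 \<in> B2"
      have "(\<Sum>c\<in>{1,2::nat}. \<Sum>j<3. g (b1,b2,c,j))
        = (\<Sum>c\<in>{1,2::nat}. \<Sum>j<3. if (x,a) \<in> blk b1 b2 c j then (if c = 1 then al b1 else be b1) else 0)"
        unfolding g_def bk_simp val_simp ..
      also have "\<dots> = (if x \<in> b1 \<and> a \<in> b2 then mu b1 else 0)" by (rule inner3) fact+
      finally show "(\<Sum>c\<in>{1,2::nat}. \<Sum>j<3. g (b1,b2,c,j)) = (if x \<in> b1 \<and> a \<in> b2 then mu b1 else 0)" .
    qed
    also have "\<dots> = (\<Sum>b1\<in>B1. if x \<in> b1 then of_nat K * mu b1 else 0)"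
    proof (rule sum.cong[OF refl])
      fix b1 assume "b1 \<in> B1"
      show "(\<Sum>b2\<in>B2. if x \<in> b1 \<and> a \<in> b2 then mu b1 else 0) = (if x \<in> b1 then of_nat K * mu b1 else 0)"
      proof (cases "x \<in> b1")
        case True
        have "(\<Sum>b2\<in>B2. if x \<in> b1 \<and> a \<in> b2 then mu b1 else 0) = (\<Sum>b2\<in>B2. if a \<in> b2 then mu b1 else 0)"
          using True by simp
        also have "\<dots> = (\<Sum>b2\<in>{b2\<in>B2. a\<in>b2}. mu b1)" by (rule sum.inter_filter[OF finB2, symmetric])
        also have "\<dots> = of_nat K * mu b1" unfolding K_def by simp
        finally show ?thesis using True by simp
      qed simp
    qed
    also have "\<dots> = (\<Sum>b1\<in>{b1\<in>B1. x\<in>b1}. of_nat K * mu b1)" by (rule sum.inter_filter[OF finB1, symmetric])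
    also have "\<dots> = of_nat K * N x" unfolding N_def by (rule sum_distrib_left[symmetric])
    finally show ?thesis .
  qed
  ultimately show ?thesis by simp
qed

lemma PB_flow: "has_zero_sum_flow (X1 \<times> X2) PB k"
  unfolding has_zero_sum_flow_def is_zero_sum_flow_def
proof (rule exI[of _ FF], rule conjI)
  show "\<forall>b\<in>PB. FF b \<noteq> 0 \<and> \<bar>FF b\<bar> \<le> int k - 1" using FF_bounds by blast
  show "\<forall>x\<in>X1 \<times> X2. (\<Sum>b\<in>{b \<in> PB. x \<in> b}. FF b) = 0"
  proof
    fix P assume "P \<in> X1 \<times> X2"
    then obtain x a where "P = (x,a)" "x \<in> X1" "a \<in> X2" by blast
    thus "(\<Sum>b\<in>{b \<in> PB. P \<in> b}. FF b) = 0" using FF_sum by simp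
  qed
qed

end


lemma main_first:
  fixes X1 :: "'a set" and X2 :: "'b set"
  assumes S1: "is_sts X1 B1" and S2: "is_sts X2 B2" and c3: "card X1 \<ge> 3" and k3: "k \<ge> 3"
    and fl: "has_zero_sum_flow X1 B1 k"
  shows "\<exists>(X::nat set) B. is_sts X B \<and> card X = card X1 * card X2 \<and> has_zero_sum_flow X B k"
proof -
  obtain f where f: "is_zero_sum_flow X1 B1 k f" using fl unfolding has_zero_sum_flow_def by blast
  interpret T: two_sts X1 B1 X2 B2 by (rule two_sts.intro[OF S1 S2])
  have "X1 \<noteq> {}" using c3 by auto
  then obtain p where pX: "p \<in> X1" by blast
  have "card (X1 - {p}) \<ge> 2" using c3 pX T.fin1 by (simp add: card_Diff_singleton)
  hence "X1 - {p} \<noteq> {}" by (metis card.empty not_numeral_le_zero)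
  then obtain q where q: "q \<in> X1" "q \<noteq> p" by blast
  define st where "st = {b\<in>B1. p\<in>b}"
  have stne: "st \<noteq> {}" using T.ex_pair1[OF pX q(1) q(2)[symmetric]] unfolding st_def by blast
  have "(card st - 1) div 2 \<le> card st" by simp
  then obtain S where S: "S \<subseteq> st" "card S = (card st - 1) div 2" by (rule obtain_subset_with_card_n)
  interpret F: flow_ctx X1 B1 X2 B2 k f p S
    by (rule flow_ctx.intro[OF two_sts.intro[OF S1 S2]], unfold_locales)
       (use f k3 pX S stne in \<open>simp_all add: st_def\<close>)
  have sts: "is_sts (X1 \<times> X2) T.PB" by (rule T.PB_sts)
  have fw: "has_zero_sum_flow (X1 \<times> X2) T.PB k" by (rule F.PB_flow)
  obtain Y :: "nat set" and B' where "is_sts Y B'" "card Y = card (X1 \<times> X2)" "has_zero_sum_flow Y B' k"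
    using transfer_nat[OF sts fw] by blast
  thus ?thesis by (auto simp: card_cartesian_product)
qed

theorem mainTheorem1:
  fixes v w k :: nat and X1 :: "'a set" and B1 :: "'a set set"
    and X2 :: "'b set" and B2 :: "'b set set"
  assumes "v \<ge> 3" and "w \<ge> 3" and "k \<ge> 3"
    and "is_sts X1 B1" and "card X1 = v"
    and "is_sts X2 B2" and "card X2 = w"
    and "has_zero_sum_flow X1 B1 k \<or> has_zero_sum_flow X2 B2 k"
  shows "\<exists>(X :: nat set) B. is_sts X B \<and> card X = v * w \<and> has_zero_sum_flow X B k"
  using assms(8)
proof
  assume "has_zero_sum_flow X1 B1 k"
  thus ?thesis using main_first[OF assms(4,6) _ assms(3)] assms(1,5,7) by simp
next
  assume "has_zero_sum_flow X2 B2 k"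
  hence "\<exists>(X::nat set) B. is_sts X B \<and> card X = card X2 * card X1 \<and> has_zero_sum_flow X B k"
    using main_first[OF assms(6,4) _ assms(3)] assms(2,7) by simp
  thus ?thesis using assms(5,7) by (simp add: mult.commute)
qed


end
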